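(* Let $B=\bigoplus_{i\in\mathbb{Z}}\mathbb{Z}_2$ and let $L_2=B\rtimes\mathbb{Z}$ be the lamplighter group, with elements written $((x_i),k)$ and multiplication $((x_i),k)\cdot((y_i),\ell)=((x_i+y_{i-k})_i,\,k+\ell)$. Equip $L_2$ with the word metric with respect to the generating set $\{t,at\}$, where $t=(0,1)$ and $at=(e_0,1)$ ($e_0$ the sequence with a single $1$ at index $0$); the corresponding Cayley graph is the Diestel–Leader graph $DL(2,2)$. Let $\Psi:L_2\to L_2$ be an isometry that is pattern preserving, i.e. there are a permutation $\sigma$ of the set of left cosets of $\langle t\rangle$ and a constant $C'\ge 0$ with $d_{\mathcal H}(\Psi(g\langle t\rangle),\sigma(g\langle t\rangle))<C'$ for all $g\in L_2$. Identify the left coset $((x_i),k)\langle t\rangle$ with $(x_i)\in B$, and let $\psi:B\to B$ be the induced permutation. Then there is $g=((z_i),k)\in L_2$ such that either $\psi=\lambda_g$ or $\psi=\lambda_g\circ\iota$, where $\lambda_g(x)=(z_i+x_{i-k})_i$ is the map induced by left multiplication by $g$ and $\iota((x_i)_i)=(x_{-i})_i$. In particular $\psi$ is a generalized affine map.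
   Context: $d_{\mathcal H}$ denotes Hausdorff distance. An affine map of $B$ is a map $x\mapsto\varphi(x)+c$ with $\varphi$ a group automorphism of $B$ and $c\in B$. A map of $B$ is generalized affine if it is the composition of an affine map of $B$ with a shift map $(x_i)\mapsto(x_{i+k})$ for some $k\in\mathbb{Z}$. *)

theory Defs
  imports "HOL-Library.Extended_Real"
begin

text \<open>Z_2 is modelled by bool with addition = exclusive or.
  B = finitely supported functions int => bool. Elements of L_2 are pairs (x,k).\<close>

type_synonym lam = "(int \<Rightarrow> bool) \<times> int"

definition Bset :: "(int \<Rightarrow> bool) set" where
  "Bset = {x. finite {i. x i}}"

definition L2 :: "lam set" where
  "L2 = Bset \<times> UNIV"

definition lmul :: "lam \<Rightarrow> lam \<Rightarrow> lam" where
  "lmul g h = (\<lambda>i. fst g i \<noteq> fst h (i - snd g), snd g + snd h)"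

definition linv :: "lam \<Rightarrow> lam" where
  "linv g = (\<lambda>i. fst g (i + snd g), - snd g)"

definition tgen :: lam where
  "tgen = (\<lambda>_. False, 1)"

definition atgen :: lam where
  "atgen = (\<lambda>i. i = 0, 1)"

definition gens :: "lam set" where
  "gens = {tgen, atgen, linv tgen, linv atgen}"

definition l2dist :: "lam \<Rightarrow> lam \<Rightarrow> nat" where
  "l2dist g h = (LEAST n. \<exists>ws. length ws = n \<and> set ws \<subseteq> gens \<and> foldl lmul g ws = h)"

definition tpow :: "int \<Rightarrow> lam" where
  "tpow n = (\<lambda>_. False, n)"

definition tcoset :: "lam \<Rightarrow> lam set" where
  "tcoset g = {lmul g (tpow n) | n. True}"

definition tcosets :: "lam set set" where
  "tcosets = tcoset ` L2"

definition setdist :: "lam \<Rightarrow> lam set \<Rightarrow> ereal" where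
  "setdist a S = (INF b\<in>S. ereal (real (l2dist a b)))"

definition hausdorff :: "lam set \<Rightarrow> lam set \<Rightarrow> ereal" where
  "hausdorff S T = max (SUP a\<in>S. setdist a T) (SUP b\<in>T. setdist b S)"

definition lam_map :: "lam \<Rightarrow> (int \<Rightarrow> bool) \<Rightarrow> (int \<Rightarrow> bool)" where
  "lam_map g x = (\<lambda>i. fst g i \<noteq> x (i - snd g))"

definition iota :: "(int \<Rightarrow> bool) \<Rightarrow> (int \<Rightarrow> bool)" where
  "iota x = (\<lambda>i. x (- i))"

end

theory Submission
  imports Defs
begin


definition fl :: "(int \<Rightarrow> bool) \<Rightarrow> int \<Rightarrow> (int \<Rightarrow> bool)" where
  "fl u a = (\<lambda>i. u i \<noteq> (i = a))"

lemma fl_apply: "fl u a i = (if i = a then \<not> u i else u i)"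
  by (auto simp: fl_def)

lemma fl_fl[simp]: "fl (fl u a) a = u"
  by (auto simp: fl_def)

lemma fl_neq[simp]: "fl u a \<noteq> u"
  by (metis fl_apply)

lemma fl_Bset: "u \<in> Bset \<Longrightarrow> fl u a \<in> Bset"
proof -
  assume "u \<in> Bset"
  then have "finite (insert a {i. u i})" by (simp add: Bset_def)
  moreover have "{i. fl u a i} \<subseteq> insert a {i. u i}" by (auto simp: fl_apply split: if_splits)
  ultimately show ?thesis unfolding Bset_def by (auto intro: finite_subset)
qed

lemma mul_t: "lmul p tgen = (fst p, snd p + 1)"
  by (simp add: lmul_def tgen_def)
lemma mul_at: "lmul p atgen = (fl (fst p) (snd p), snd p + 1)"
  by (auto simp: lmul_def atgen_def fl_def)
lemma mul_ti: "lmul p (linv tgen) = (fst p, snd p - 1)"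
  by (simp add: lmul_def tgen_def linv_def)
lemma mul_ati: "lmul p (linv atgen) = (fl (fst p) (snd p - 1), snd p - 1)"
proof -
  have "(\<lambda>i. fst p i \<noteq> (i - snd p + 1 = 0)) = fl (fst p) (snd p - 1)"
    by (auto simp: fl_def)
  then show ?thesis by (simp add: lmul_def atgen_def linv_def algebra_simps)
qed

lemma gens_t: "tgen \<in> gens" and gens_at: "atgen \<in> gens"
  and gens_ti: "linv tgen \<in> gens" and gens_ati: "linv atgen \<in> gens"
  by (auto simp: gens_def)

lemma step_cases:
  assumes "s \<in> gens"
  shows "lmul p s = (fst p, snd p + 1) \<or> lmul p s = (fl (fst p) (snd p), snd p + 1)
    \<or> lmul p s = (fst p, snd p - 1) \<or> lmul p s = (fl (fst p) (snd p - 1), snd p - 1)"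
  using assms by (auto simp: gens_def mul_t mul_at mul_ti mul_ati)

definition adj :: "lam \<Rightarrow> lam \<Rightarrow> bool" where
  "adj p q \<longleftrightarrow> (\<exists>s\<in>gens. q = lmul p s)"

lemma adj_cases:
  assumes "adj p q"
  shows "q = (fst p, snd p + 1) \<or> q = (fl (fst p) (snd p), snd p + 1)
    \<or> q = (fst p, snd p - 1) \<or> q = (fl (fst p) (snd p - 1), snd p - 1)"
  using assms step_cases unfolding adj_def by blast

lemma adj_up1: "adj (u, a) (u, a + 1)"
  unfolding adj_def using mul_t[of "(u,a)"] gens_t by force
lemma adj_up2: "adj (u, a) (fl u a, a + 1)"
  unfolding adj_def using mul_at[of "(u,a)"] gens_at by force
lemma adj_dn1: "adj (u, a) (u, a - 1)"
  unfolding adj_def using mul_ti[of "(u,a)"] gens_ti by force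
lemma adj_dn2: "adj (u, a) (fl u (a - 1), a - 1)"
  unfolding adj_def using mul_ati[of "(u,a)"] gens_ati by force

lemma adj_height: "adj p q \<Longrightarrow> snd q = snd p + 1 \<or> snd q = snd p - 1"
  using adj_cases by fastforce

lemma adj_toggle: "adj p q \<Longrightarrow> i \<noteq> min (snd p) (snd q) \<Longrightarrow> fst q i = fst p i"
  by (drule adj_cases) (auto simp: fl_apply)

lemma adj_sym: "adj p q \<Longrightarrow> adj q p"
proof -
  assume "adj p q"
  obtain u a where p: "p = (u, a)" by fastforce
  from adj_cases[OF \<open>adj p q\<close>] show ?thesis
  proof (elim disjE)
    assume "q = (fst p, snd p + 1)" then show ?thesis using adj_dn1[of u "a+1"] p by simp
  next
    assume "q = (fl (fst p) (snd p), snd p + 1)" then show ?thesis using adj_dn2[of "fl u a" "a+1"] p by simp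
  next
    assume "q = (fst p, snd p - 1)" then show ?thesis using adj_up1[of u "a-1"] p by simp
  next
    assume "q = (fl (fst p) (snd p - 1), snd p - 1)" then show ?thesis using adj_up2[of "fl u (a - 1)" "a-1"] p by simp
  qed
qed

lemma adj_L2: "adj p q \<Longrightarrow> p \<in> L2 \<Longrightarrow> q \<in> L2"
  by (drule adj_cases) (auto simp: L2_def fl_Bset)

lemma adj_neq_height: "adj p q \<Longrightarrow> snd p \<noteq> snd q"
  using adj_height by fastforce

lemma common_iff:
  assumes "adj p q1" "adj p q2" "q1 \<noteq> q2"
  shows "(\<exists>r. r \<noteq> p \<and> adj q1 r \<and> adj q2 r) \<longleftrightarrow> snd q1 = snd q2"
proof
  assume "\<exists>r. r \<noteq> p \<and> adj q1 r \<and> adj q2 r"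
  then obtain r where r: "r \<noteq> p" "adj q1 r" "adj q2 r" by blast
  show "snd q1 = snd q2"
  proof (rule ccontr)
    assume ne: "snd q1 \<noteq> snd q2"
    have h1: "snd q1 = snd p + 1 \<or> snd q1 = snd p - 1" using adj_height[OF assms(1)] .
    have h2: "snd q2 = snd p + 1 \<or> snd q2 = snd p - 1" using adj_height[OF assms(2)] .
    have hr1: "snd r = snd q1 + 1 \<or> snd r = snd q1 - 1" using adj_height[OF r(2)] .
    have hr2: "snd r = snd q2 + 1 \<or> snd r = snd q2 - 1" using adj_height[OF r(3)] .
    have hr: "snd r = snd p" using h1 h2 hr1 hr2 ne by auto
    have "fst r = fst p"
    proof
      fix i
      show "fst r i = fst p i"
      proof (cases "i = min (snd p) (snd q1)")
        case True
        then have "i \<noteq> min (snd p) (snd q2)" "i \<noteq> min (snd q2) (snd r)"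
          using h1 h2 ne hr by auto
        then show ?thesis using adj_toggle[OF assms(2)] adj_toggle[OF r(3)] by metis
      next
        case False
        then have "i \<noteq> min (snd q1) (snd r)" using h1 hr by auto
        then show ?thesis using adj_toggle[OF assms(1)] adj_toggle[OF r(2)] False by metis
      qed
    qed
    then have "r = p" using hr by (simp add: prod_eq_iff)
    then show False using r(1) by simp
  qed
next
  assume eq: "snd q1 = snd q2"
  obtain u a where p: "p = (u, a)" by fastforce
  from adj_cases[OF assms(1)] adj_cases[OF assms(2)] eq assms(3) p
  have "(q1 = (u, a+1) \<and> q2 = (fl u a, a+1)) \<or> (q2 = (u, a+1) \<and> q1 = (fl u a, a+1))
     \<or> (q1 = (u, a-1) \<and> q2 = (fl u (a-1), a-1)) \<or> (q2 = (u, a-1) \<and> q1 = (fl u (a-1), a-1))"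
    by auto
  then show "\<exists>r. r \<noteq> p \<and> adj q1 r \<and> adj q2 r"
  proof (elim disjE conjE)
    assume "q1 = (u, a+1)" "q2 = (fl u a, a+1)"
    then show ?thesis using adj_dn2[of u "a+1"] adj_dn1[of "fl u a" "a+1"] p
      by (intro exI[of _ "(fl u a, a)"]) auto
  next
    assume "q2 = (u, a+1)" "q1 = (fl u a, a+1)"
    then show ?thesis using adj_dn2[of u "a+1"] adj_dn1[of "fl u a" "a+1"] p
      by (intro exI[of _ "(fl u a, a)"]) auto
  next
    assume "q1 = (u, a-1)" "q2 = (fl u (a-1), a-1)"
    then show ?thesis using adj_up2[of u "a-1"] adj_up1[of "fl u (a-1)" "a-1"] p
      by (intro exI[of _ "(fl u (a-1), a)"]) auto
  next
    assume "q2 = (u, a-1)" "q1 = (fl u (a-1), a-1)"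
    then show ?thesis using adj_up2[of u "a-1"] adj_up1[of "fl u (a-1)" "a-1"] p
      by (intro exI[of _ "(fl u (a-1), a)"]) auto
  qed
qed

lemma lmul_cancel: "lmul p s1 = lmul p s2 \<Longrightarrow> s1 = s2"
proof -
  assume e: "lmul p s1 = lmul p s2"
  then have "snd s1 = snd s2" by (simp add: lmul_def)
  moreover have "fst s1 j = fst s2 j" for j
  proof -
    from e have "(\<lambda>i. fst p i \<noteq> fst s1 (i - snd p)) = (\<lambda>i. fst p i \<noteq> fst s2 (i - snd p))"
      by (simp add: lmul_def)
    then have "fst p (j + snd p) \<noteq> fst s1 j \<longleftrightarrow> fst p (j + snd p) \<noteq> fst s2 j"
      by (metis add_diff_cancel_right')
    then show ?thesis by blast
  qed
  ultimately show ?thesis by (simp add: prod_eq_iff fun_eq_iff)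
qed



definition reach :: "lam \<Rightarrow> lam \<Rightarrow> bool" where
  "reach p q \<longleftrightarrow> (\<exists>ws. set ws \<subseteq> gens \<and> foldl lmul p ws = q)"

lemma reach_refl: "reach p p"
  unfolding reach_def by (rule exI[of _ "[]"]) simp

lemma reach_trans: "reach p q \<Longrightarrow> reach q r \<Longrightarrow> reach p r"
  unfolding reach_def by (metis foldl_append le_sup_iff set_append)

lemma reach_step: "s \<in> gens \<Longrightarrow> reach p (lmul p s)"
  unfolding reach_def by (rule exI[of _ "[s]"]) simp

lemma reach_adj: "adj p q \<Longrightarrow> reach p q"
  unfolding adj_def using reach_step by blast

lemma reach_up: "reach (u, a) (u, a + int n)"
proof (induction n)
  case 0 then show ?case by (simp add: reach_refl)
next
  case (Suc n)
  have "reach (u, a + int n) (u, a + int n + 1)" by (rule reach_adj[OF adj_up1])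
  moreover have "a + int (Suc n) = a + int n + 1" by simp
  ultimately show ?case using Suc reach_trans by metis
qed

lemma reach_dn: "reach (u, a) (u, a - int n)"
proof (induction n)
  case 0 then show ?case by (simp add: reach_refl)
next
  case (Suc n)
  have "reach (u, a - int n) (u, a - int n - 1)" by (rule reach_adj[OF adj_dn1])
  moreover have "a - int (Suc n) = a - int n - 1" by simp
  ultimately show ?case using Suc reach_trans by metis
qed

lemma reach_height: "reach (u, a) (u, b)"
proof (cases "a \<le> b")
  case True
  then have "b = a + int (nat (b - a))" by simp
  then show ?thesis by (metis reach_up)
next
  case False
  then have "b = a - int (nat (a - b))" by simp
  then show ?thesis by (metis reach_dn)
qed

lemma reach_flip: "reach (u, a) (fl u i, a)"
proof -
  have "reach (u, a) (u, i)" by (rule reach_height)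
  moreover have "reach (u, i) (fl u i, i + 1)" using adj_up2 reach_adj by blast
  moreover have "reach (fl u i, i + 1) (fl u i, a)" by (rule reach_height)
  ultimately show ?thesis using reach_trans by blast
qed

lemma reach_set: "finite S \<Longrightarrow> reach (u, a) (\<lambda>j. u j \<noteq> (j \<in> S), a)"
proof (induction S rule: finite_induct)
  case empty then show ?case by (simp add: reach_refl)
next
  case (insert i S)
  have "(\<lambda>j. u j \<noteq> (j \<in> insert i S)) = fl (\<lambda>j. u j \<noteq> (j \<in> S)) i"
    using insert(2) by (auto simp: fl_def)
  then show ?case using insert(3) reach_flip reach_trans by metis
qed

lemma reach_L2: "p \<in> L2 \<Longrightarrow> q \<in> L2 \<Longrightarrow> reach p q"
proof -
  assume "p \<in> L2" "q \<in> L2"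
  then have f: "finite {j. fst p j}" "finite {j. fst q j}" by (auto simp: L2_def Bset_def)
  let ?S = "{j. fst p j \<noteq> fst q j}"
  have "?S \<subseteq> {j. fst p j} \<union> {j. fst q j}" by auto
  then have "finite ?S" using f finite_subset by blast
  then have "reach (fst p, snd p) (\<lambda>j. fst p j \<noteq> (j \<in> ?S), snd p)" by (rule reach_set)
  moreover have "(\<lambda>j. fst p j \<noteq> (j \<in> ?S)) = fst q" by auto
  ultimately have "reach p (fst q, snd p)" by simp
  moreover have "reach (fst q, snd p) (fst q, snd q)" by (rule reach_height)
  ultimately show ?thesis using reach_trans by fastforce
qed

lemma word_toggle:
  "set ws \<subseteq> gens \<Longrightarrow> foldl lmul p ws = q \<Longrightarrow>
   i < snd p - int (length ws) \<or> i \<ge> snd p + int (length ws) \<Longrightarrow> fst q i = fst p i"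
proof (induction ws arbitrary: p)
  case Nil then show ?case by simp
next
  case (Cons s ws)
  let ?p' = "lmul p s"
  have a: "adj p ?p'" using Cons(2) unfolding adj_def by auto
  have h: "snd ?p' = snd p + 1 \<or> snd ?p' = snd p - 1" using adj_height[OF a] .
  have ws: "set ws \<subseteq> gens" "foldl lmul ?p' ws = q" using Cons(2,3) by auto
  have "i < snd ?p' - int (length ws) \<or> i \<ge> snd ?p' + int (length ws)"
    using Cons(4) h by auto
  then have "fst q i = fst ?p' i" using Cons.IH[OF ws] by blast
  moreover have "i \<noteq> min (snd p) (snd ?p')" using Cons(4) h by auto
  ultimately show ?case using adj_toggle[OF a] by simp
qed

lemma l2dist_word:
  assumes "reach p q"
  shows "\<exists>ws. set ws \<subseteq> gens \<and> foldl lmul p ws = q \<and> length ws = l2dist p q"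
proof -
  let ?P = "\<lambda>n. \<exists>ws. length ws = n \<and> set ws \<subseteq> gens \<and> foldl lmul p ws = q"
  from assms obtain ws where "set ws \<subseteq> gens \<and> foldl lmul p ws = q" unfolding reach_def by blast
  then have "?P (length ws)" by blast
  then have "?P (Least ?P)" by (rule LeastI)
  then show ?thesis unfolding l2dist_def by blast
qed

lemma far_point:
  assumes "reach a b" "l2dist a b \<le> K" "i < snd a - int K \<or> i \<ge> snd a + int K"
  shows "fst b i = fst a i"
proof -
  obtain ws where w: "set ws \<subseteq> gens" "foldl lmul a ws = b" "length ws = l2dist a b"
    using l2dist_word[OF assms(1)] by blast
  show ?thesis using word_toggle[OF w(1,2)] w(3) assms(2,3) by auto
qed

lemma adj_l2dist: "adj p q \<Longrightarrow> l2dist p q = 1"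
proof -
  assume a: "adj p q"
  then obtain s where s: "s \<in> gens" "q = lmul p s" unfolding adj_def by blast
  have ne: "q \<noteq> p" using adj_neq_height[OF a] by auto
  show ?thesis unfolding l2dist_def
  proof (rule Least_equality)
    show "\<exists>ws. length ws = 1 \<and> set ws \<subseteq> gens \<and> foldl lmul p ws = q"
      using s by (intro exI[of _ "[s]"]) simp
  next
    fix m assume "\<exists>ws. length ws = m \<and> set ws \<subseteq> gens \<and> foldl lmul p ws = q"
    then obtain ws where "length ws = m" "foldl lmul p ws = q" by blast
    then show "1 \<le> m" using ne by (cases ws) auto
  qed
qed

lemma l2dist_adj: "reach p q \<Longrightarrow> l2dist p q = 1 \<Longrightarrow> adj p q"
proof -
  assume "reach p q" "l2dist p q = 1"
  then obtain ws where w: "set ws \<subseteq> gens" "foldl lmul p ws = q" "length ws = 1"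
    using l2dist_word by fastforce
  then obtain s where "ws = [s]" by (cases ws) auto
  then show ?thesis using w unfolding adj_def by auto
qed



locale iso_ctx =
  fixes Psi :: "lam \<Rightarrow> lam"
  assumes bij: "bij_betw Psi L2 L2"
    and iso: "\<forall>g\<in>L2. \<forall>h\<in>L2. l2dist (Psi g) (Psi h) = l2dist g h"
begin

lemma PsiL2: "p \<in> L2 \<Longrightarrow> Psi p \<in> L2"
  using bij bij_betwE by blast

lemma Psi_inj: "p \<in> L2 \<Longrightarrow> q \<in> L2 \<Longrightarrow> Psi p = Psi q \<Longrightarrow> p = q"
  using bij bij_betw_imp_inj_on inj_onD by metis

lemma Psi_surj: "r \<in> L2 \<Longrightarrow> \<exists>p\<in>L2. Psi p = r"
  using bij bij_betw_imp_surj_on by (metis imageE)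

lemma adj_iff: "p \<in> L2 \<Longrightarrow> q \<in> L2 \<Longrightarrow> adj (Psi p) (Psi q) \<longleftrightarrow> adj p q"
proof
  assume L: "p \<in> L2" "q \<in> L2" and a: "adj (Psi p) (Psi q)"
  have "l2dist p q = 1" using adj_l2dist[OF a] iso L by simp
  then show "adj p q" using l2dist_adj reach_L2 L by blast
next
  assume L: "p \<in> L2" "q \<in> L2" and a: "adj p q"
  have "l2dist (Psi p) (Psi q) = 1" using adj_l2dist[OF a] iso L by simp
  then show "adj (Psi p) (Psi q)" using l2dist_adj reach_L2 L PsiL2 by blast
qed

definition eps :: "lam \<Rightarrow> int" where
  "eps p = snd (Psi (lmul p tgen)) - snd (Psi p)"

lemma adj_t: "adj p (lmul p tgen)"
  unfolding adj_def using gens_t by blast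

lemma adj_s: "s \<in> gens \<Longrightarrow> adj p (lmul p s)"
  unfolding adj_def by blast

lemma eps_pm: "p \<in> L2 \<Longrightarrow> eps p = 1 \<or> eps p = -1"
proof -
  assume L: "p \<in> L2"
  have "lmul p tgen \<in> L2" using adj_L2[OF adj_t L] .
  then have "adj (Psi p) (Psi (lmul p tgen))" using adj_iff L adj_t by blast
  then show ?thesis using adj_height unfolding eps_def by fastforce
qed

lemma height_step:
  assumes L: "p \<in> L2" and s: "s \<in> gens"
  shows "snd (Psi (lmul p s)) - snd (Psi p) = eps p * (snd (lmul p s) - snd p)"
proof (cases "s = tgen")
  case True then show ?thesis by (simp add: eps_def mul_t)
next
  case False
  define q1 where "q1 = lmul p tgen"
  define q2 where "q2 = lmul p s"
  have a1: "adj p q1" and a2: "adj p q2" using adj_t adj_s[OF s] q1_def q2_def by auto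
  have L1: "q1 \<in> L2" and L2': "q2 \<in> L2" using adj_L2 a1 a2 L by auto
  have ne: "q1 \<noteq> q2" using False lmul_cancel unfolding q1_def q2_def by metis
  have b1: "adj (Psi p) (Psi q1)" and b2: "adj (Psi p) (Psi q2)" using adj_iff a1 a2 L L1 L2' by auto
  have neP: "Psi q1 \<noteq> Psi q2" using Psi_inj L1 L2' ne by blast
  have hq1: "snd q1 = snd p + 1" by (simp add: q1_def mul_t)
  have hq2: "snd q2 = snd p + 1 \<or> snd q2 = snd p - 1" using adj_height[OF a2] .
  have hP1: "snd (Psi q1) = snd (Psi p) + 1 \<or> snd (Psi q1) = snd (Psi p) - 1" using adj_height[OF b1] .
  have hP2: "snd (Psi q2) = snd (Psi p) + 1 \<or> snd (Psi q2) = snd (Psi p) - 1" using adj_height[OF b2] .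
  have e: "eps p = snd (Psi q1) - snd (Psi p)" by (simp add: eps_def q1_def)
  show ?thesis
  proof (cases "snd q2 = snd q1")
    case True
    then obtain r where r: "r \<noteq> p" "adj q1 r" "adj q2 r" using common_iff[OF a1 a2 ne] by metis
    have Lr: "r \<in> L2" using adj_L2 r(2) L1 by blast
    have "Psi r \<noteq> Psi p" using Psi_inj Lr L r(1) by blast
    moreover have "adj (Psi q1) (Psi r)" "adj (Psi q2) (Psi r)" using adj_iff r Lr L1 L2' by auto
    ultimately have "snd (Psi q1) = snd (Psi q2)" using common_iff[OF b1 b2 neP] by blast
    then show ?thesis using True e hq1 q2_def by simp
  next
    case False
    have "snd (Psi q1) \<noteq> snd (Psi q2)"
    proof
      assume "snd (Psi q1) = snd (Psi q2)"
      then obtain r' where r': "r' \<noteq> Psi p" "adj (Psi q1) r'" "adj (Psi q2) r'"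
        using common_iff[OF b1 b2 neP] by blast
      have "r' \<in> L2" using adj_L2 r'(2) PsiL2 L1 by blast
      then obtain r where Lr: "r \<in> L2" and rr: "Psi r = r'" using Psi_surj by blast
      have "r \<noteq> p" using rr r'(1) by blast
      moreover have "adj q1 r" using adj_iff[OF L1 Lr] r'(2) rr by simp
      moreover have "adj q2 r" using adj_iff[OF L2' Lr] r'(3) rr by simp
      ultimately have "snd q1 = snd q2" using common_iff[OF a1 a2 ne] by blast
      then show False using False by simp
    qed
    then show ?thesis using False hq1 hq2 hP1 hP2 e q2_def by auto
  qed
qed

lemma inv_step: "s \<in> gens \<Longrightarrow> \<exists>s'\<in>gens. lmul (lmul p s) s' = p"
proof -
  assume "s \<in> gens"
  then have "adj p (lmul p s)" by (rule adj_s)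
  then have "adj (lmul p s) p" by (rule adj_sym)
  then show ?thesis unfolding adj_def by metis
qed

lemma eps_step:
  assumes L: "p \<in> L2" and s: "s \<in> gens"
  shows "eps (lmul p s) = eps p"
proof -
  let ?q = "lmul p s"
  obtain s' where s': "s' \<in> gens" "lmul ?q s' = p" using inv_step[OF s] by blast
  have Lq: "?q \<in> L2" using adj_L2[OF adj_s[OF s] L] .
  have e1: "snd (Psi ?q) - snd (Psi p) = eps p * (snd ?q - snd p)" using height_step[OF L s] .
  have e2: "snd (Psi p) - snd (Psi ?q) = eps ?q * (snd p - snd ?q)" using height_step[OF Lq s'(1)] s'(2) by simp
  have nz: "snd ?q - snd p \<noteq> 0" using adj_neq_height[OF adj_s[OF s], of p] by simp
  from e1 e2 have "eps p * (snd ?q - snd p) = eps ?q * (snd ?q - snd p)" by (simp add: algebra_simps)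
  then show ?thesis using nz by simp
qed

definition p0 :: lam where "p0 = (\<lambda>_. False, 0)"

lemma p0L2: "p0 \<in> L2"
  by (simp add: p0_def L2_def Bset_def)

lemma global_word:
  "set ws \<subseteq> gens \<Longrightarrow> eps (foldl lmul p0 ws) = eps p0 \<and>
     snd (Psi (foldl lmul p0 ws)) = snd (Psi p0) + eps p0 * snd (foldl lmul p0 ws) \<and>
     foldl lmul p0 ws \<in> L2"
proof (induction ws rule: rev_induct)
  case Nil then show ?case using p0L2 by (simp add: p0_def)
next
  case (snoc s ws)
  let ?q = "foldl lmul p0 ws"
  have s: "s \<in> gens" and IH: "eps ?q = eps p0"
    "snd (Psi ?q) = snd (Psi p0) + eps p0 * snd ?q" "?q \<in> L2" using snoc by auto
  have "snd (Psi (lmul ?q s)) - snd (Psi ?q) = eps ?q * (snd (lmul ?q s) - snd ?q)"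
    using height_step[OF IH(3) s] .
  moreover have "eps (lmul ?q s) = eps ?q" using eps_step[OF IH(3) s] .
  moreover have "lmul ?q s \<in> L2" using adj_L2[OF adj_s[OF s] IH(3)] .
  ultimately show ?case using IH by (simp add: algebra_simps)
qed

lemma global:
  assumes "q \<in> L2"
  shows "snd (Psi q) = snd (Psi p0) + eps p0 * snd q"
proof -
  obtain ws where "set ws \<subseteq> gens" "foldl lmul p0 ws = q"
    using reach_L2[OF p0L2 assms] unfolding reach_def by blast
  then show ?thesis using global_word by blast
qed

lemma eps0: "eps p0 = 1 \<or> eps p0 = -1"
  using eps_pm p0L2 by blast

end



lemma path_up:
  assumes "\<forall>n. adj (q n) (q (Suc n))" "\<forall>n. snd (q n) = snd (q 0) + int n" "i < snd (q 0)"
  shows "fst (q n) i = fst (q 0) i"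
proof (induction n)
  case 0 then show ?case by simp
next
  case (Suc n)
  have "snd (q n) = snd (q 0) + int n" "snd (q (Suc n)) = snd (q 0) + int (Suc n)"
    using assms(2) by blast+
  then have "i \<noteq> min (snd (q n)) (snd (q (Suc n)))" using assms(3) by simp
  then show ?case using adj_toggle[OF assms(1)[rule_format, of n]] Suc by simp
qed

lemma path_dn:
  assumes "\<forall>n. adj (q n) (q (Suc n))" "\<forall>n. snd (q n) = snd (q 0) - int n" "i \<ge> snd (q 0)"
  shows "fst (q n) i = fst (q 0) i"
proof (induction n)
  case 0 then show ?case by simp
next
  case (Suc n)
  have "snd (q n) = snd (q 0) - int n" "snd (q (Suc n)) = snd (q 0) - int (Suc n)"
    using assms(2) by blast+
  then have "i \<noteq> min (snd (q n)) (snd (q (Suc n)))" using assms(3) by simp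
  then show ?case using adj_toggle[OF assms(1)[rule_format, of n]] Suc by simp
qed

locale pp_ctx = iso_ctx +
  fixes psi :: "(int \<Rightarrow> bool) \<Rightarrow> (int \<Rightarrow> bool)" and K :: nat
  assumes psiB: "\<forall>x\<in>Bset. psi x \<in> Bset"
    and close: "\<forall>x\<in>Bset. \<forall>n. \<exists>b\<in>L2. fst b = psi x \<and> l2dist (Psi (x, n)) b \<le> K"
begin

abbreviation "c0 \<equiv> snd (Psi p0)"
abbreviation "e0 \<equiv> eps p0"

lemma e0sq: "e0 * e0 = 1"
  using eps0 by auto

lemma adj_line: "e = 1 \<or> e = -1 \<Longrightarrow> adj (x, j) (x, j + e)"
  using adj_up1 adj_dn1 by auto

lemma line:
  assumes x: "x \<in> Bset"
  shows "Psi (x, m) = (psi x, c0 + e0 * m)"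
proof -
  have Lx: "(x, j) \<in> L2" for j using x by (simp add: L2_def)
  have hgt: "snd (Psi (x, j)) = c0 + e0 * j" for j using global[OF Lx] by simp
  define qu where "qu n = Psi (x, m + e0 * int n)" for n
  define qd where "qd n = Psi (x, m - e0 * int n)" for n
  have au: "\<forall>n. adj (qu n) (qu (Suc n))"
  proof
    fix n
    have "adj (x, m + e0 * int n) (x, m + e0 * int n + e0)" using adj_line eps0 by blast
    then have "adj (x, m + e0 * int n) (x, m + e0 * int (Suc n))" by (simp add: algebra_simps)
    then show "adj (qu n) (qu (Suc n))" unfolding qu_def using adj_iff Lx by blast
  qed
  have ad: "\<forall>n. adj (qd n) (qd (Suc n))"
  proof
    fix n
    have "- e0 = 1 \<or> - e0 = -1" using eps0 by auto
    then have "adj (x, m - e0 * int n) (x, m - e0 * int n + (- e0))" by (rule adj_line)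
    then have "adj (x, m - e0 * int n) (x, m - e0 * int (Suc n))" by (simp add: algebra_simps)
    then show "adj (qd n) (qd (Suc n))" unfolding qd_def using adj_iff Lx by blast
  qed
  have hu: "snd (qu n) = c0 + e0 * m + int n" for n
    unfolding qu_def hgt using e0sq by (simp add: algebra_simps)
  have hd: "snd (qd n) = c0 + e0 * m - int n" for n
    unfolding qd_def hgt using e0sq by (simp add: algebra_simps)
  have qu0: "qu 0 = Psi (x, m)" and qd0: "qd 0 = Psi (x, m)" by (simp_all add: qu_def qd_def)
  have "fst (Psi (x, m)) i = psi x i" for i
  proof (cases "i < c0 + e0 * m")
    case True
    have "fst (qu K) i = fst (qu 0) i"
      using path_up[OF au, of i K] hu True by simp
    moreover obtain b where b: "b \<in> L2" "fst b = psi x" "l2dist (qu K) b \<le> K"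
      using close x unfolding qu_def by blast
    moreover have "qu K \<in> L2" unfolding qu_def using PsiL2 Lx by blast
    ultimately show ?thesis using far_point[of "qu K" b K i] reach_L2 hu True qu0 by auto
  next
    case False
    have "fst (qd K) i = fst (qd 0) i"
      using path_dn[OF ad, of i K] hd False by simp
    moreover obtain b where b: "b \<in> L2" "fst b = psi x" "l2dist (qd K) b \<le> K"
      using close x unfolding qd_def by blast
    moreover have "qd K \<in> L2" unfolding qd_def using PsiL2 Lx by blast
    ultimately show ?thesis using far_point[of "qd K" b K i] reach_L2 hd False qd0 by auto
  qed
  then show ?thesis using hgt[of m] by (simp add: prod_eq_iff fun_eq_iff)
qed

lemma flipstep:
  assumes x: "x \<in> Bset"
  shows "psi (fl x i) = fl (psi x) (min (c0 + e0 * i) (c0 + e0 * (i + 1)))"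
proof -
  have Lx: "(x, i) \<in> L2" and Lf: "(fl x i, i + 1) \<in> L2" "(x, i+1) \<in> L2"
    using x fl_Bset by (auto simp: L2_def)
  have "adj (x, i) (fl x i, i + 1)" by (rule adj_up2)
  then have a: "adj (psi x, c0 + e0 * i) (psi (fl x i), c0 + e0 * (i + 1))"
    using adj_iff[OF Lx Lf(1)] line x fl_Bset by simp
  let ?j = "min (c0 + e0 * i) (c0 + e0 * (i + 1))"
  have agree: "k \<noteq> ?j \<Longrightarrow> psi (fl x i) k = psi x k" for k
    using adj_toggle[OF a, of k] by simp
  have "Psi (fl x i, i + 1) \<noteq> Psi (x, i + 1)"
    using Psi_inj[OF Lf] fl_neq by blast
  then have "psi (fl x i) \<noteq> psi x" using line x fl_Bset by auto
  then have "psi (fl x i) ?j \<noteq> psi x ?j"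
  proof (rule contrapos_nn)
    assume "psi (fl x i) ?j = psi x ?j"
    then show "psi (fl x i) = psi x" using agree by (intro ext) metis
  qed
  then show ?thesis using agree by (auto simp: fun_eq_iff fl_apply)
qed

lemma psi_set:
  assumes "finite S"
  shows "(e0 = 1 \<longrightarrow> psi (\<lambda>j. j \<in> S) = (\<lambda>j. psi (\<lambda>_. False) j \<noteq> (j - c0 \<in> S))) \<and>
         (e0 = -1 \<longrightarrow> psi (\<lambda>j. j \<in> S) = (\<lambda>j. psi (\<lambda>_. False) j \<noteq> (c0 - 1 - j \<in> S)))"
  using assms
proof (induction S rule: finite_induct)
  case empty then show ?case by simp
next
  case (insert i S)
  have xB: "(\<lambda>j. j \<in> S) \<in> Bset" using insert(1) by (simp add: Bset_def)
  have fe: "(\<lambda>j. j \<in> insert i S) = fl (\<lambda>j. j \<in> S) i"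
    using insert(2) by (auto simp: fl_def)
  have st: "psi (\<lambda>j. j \<in> insert i S) = fl (psi (\<lambda>j. j \<in> S)) (min (c0 + e0 * i) (c0 + e0 * (i + 1)))"
    using flipstep[OF xB, of i] fe by simp
  show ?case
  proof (intro conjI impI)
    assume e: "e0 = 1"
    have m: "min (c0 + e0 * i) (c0 + e0 * (i + 1)) = c0 + i" using e by simp
    show "psi (\<lambda>j. j \<in> insert i S) = (\<lambda>j. psi (\<lambda>_. False) j \<noteq> (j - c0 \<in> insert i S))"
      using st m insert(3) e insert(2) by (auto simp: fun_eq_iff fl_apply)
  next
    assume e: "e0 = -1"
    have m: "min (c0 + e0 * i) (c0 + e0 * (i + 1)) = c0 - 1 - i" using e by simp
    show "psi (\<lambda>j. j \<in> insert i S) = (\<lambda>j. psi (\<lambda>_. False) j \<noteq> (c0 - 1 - j \<in> insert i S))"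
      using st m insert(3) e insert(2) by (auto simp: fun_eq_iff fl_apply)
  qed
qed

lemma final:
  "\<exists>z k. (z, k) \<in> L2 \<and> ((\<forall>x\<in>Bset. psi x = lam_map (z, k) x) \<or>
      (\<forall>x\<in>Bset. psi x = lam_map (z, k) (iota x)))"
proof -
  let ?z = "psi (\<lambda>_. False)"
  have zB: "?z \<in> Bset" using psiB by (simp add: Bset_def)
  have xS: "x \<in> Bset \<Longrightarrow> x = (\<lambda>j. j \<in> {j. x j}) \<and> finite {j. x j}" for x
    by (simp add: Bset_def)
  show ?thesis
  proof (cases "e0 = 1")
    case True
    have "\<forall>x\<in>Bset. psi x = lam_map (?z, c0) x"
    proof
      fix x assume "x \<in> Bset"
      then have "psi x = (\<lambda>j. ?z j \<noteq> (j - c0 \<in> {j. x j}))" using psi_set xS True by metis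
      then show "psi x = lam_map (?z, c0) x" by (simp add: lam_map_def)
    qed
    then show ?thesis using zB by (auto simp: L2_def)
  next
    case False
    then have F: "e0 = -1" using eps0 by simp
    have "\<forall>x\<in>Bset. psi x = lam_map (?z, c0 - 1) (iota x)"
    proof
      fix x assume "x \<in> Bset"
      then have "psi x = (\<lambda>j. ?z j \<noteq> (c0 - 1 - j \<in> {j. x j}))" using psi_set xS F by metis
      then show "psi x = lam_map (?z, c0 - 1) (iota x)" by (simp add: lam_map_def iota_def)
    qed
    then show ?thesis using zB by (auto simp: L2_def)
  qed
qed

end



lemma tcoset_eq: "tcoset g = {p. fst p = fst g}"
proof -
  have "lmul g (tpow n) = (fst g, snd g + n)" for n by (simp add: lmul_def tpow_def)
  then have "tcoset g = {(fst g, snd g + n) | n. True}" unfolding tcoset_def by simp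
  also have "\<dots> = {p. fst p = fst g}"
  proof (rule set_eqI, rule iffI)
    fix p :: lam assume "p \<in> {(fst g, snd g + n) | n. True}"
    then show "p \<in> {p. fst p = fst g}" by auto
  next
    fix p :: lam assume "p \<in> {p. fst p = fst g}"
    then have "p = (fst g, snd g + (snd p - snd g))" by (simp add: prod_eq_iff)
    then show "p \<in> {(fst g, snd g + n) | n. True}" by blast
  qed
  finally show ?thesis .
qed

theorem theorem1p1:
  fixes \<Psi> :: "lam \<Rightarrow> lam" and \<sigma> :: "lam set \<Rightarrow> lam set" and C' :: real
  assumes "bij_betw \<Psi> L2 L2"
    and "\<forall>g\<in>L2. \<forall>h\<in>L2. l2dist (\<Psi> g) (\<Psi> h) = l2dist g h"
    and "bij_betw \<sigma> tcosets tcosets"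
    and "C' \<ge> 0"
    and "\<forall>g\<in>L2. hausdorff (\<Psi> ` tcoset g) (\<sigma> (tcoset g)) < ereal C'"
  shows "\<exists>z k. (z, k) \<in> L2 \<and>
           ((\<forall>x\<in>Bset. \<sigma> (tcoset (x, 0)) = tcoset (lam_map (z, k) x, 0)) \<or>
            (\<forall>x\<in>Bset. \<sigma> (tcoset (x, 0)) = tcoset (lam_map (z, k) (iota x), 0)))"
proof -
  define psi where "psi x = (SOME y. y \<in> Bset \<and> \<sigma> (tcoset (x, 0)) = tcoset (y, 0))" for x
  have ex: "\<exists>y. y \<in> Bset \<and> \<sigma> (tcoset (x, 0)) = tcoset (y, 0)" if x: "x \<in> Bset" for x
  proof -
    have "(x, 0) \<in> L2" using x by (simp add: L2_def)
    then have "tcoset (x, 0) \<in> tcosets" by (simp add: tcosets_def)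
    then have "\<sigma> (tcoset (x, 0)) \<in> tcosets" using assms(3) bij_betwE by blast
    then obtain g where g: "g \<in> L2" "\<sigma> (tcoset (x, 0)) = tcoset g" unfolding tcosets_def by blast
    have "tcoset g = tcoset (fst g, 0)" by (simp add: tcoset_eq)
    moreover have "fst g \<in> Bset" using g(1) by (auto simp: L2_def)
    ultimately show ?thesis using g(2) by auto
  qed
  have psi: "psi x \<in> Bset \<and> \<sigma> (tcoset (x, 0)) = tcoset (psi x, 0)" if "x \<in> Bset" for x
    unfolding psi_def using someI_ex[OF ex[OF that]] .
  define K where "K = nat \<lceil>C'\<rceil>"
  have close: "\<forall>x\<in>Bset. \<forall>n. \<exists>b\<in>L2. fst b = psi x \<and> l2dist (\<Psi> (x, n)) b \<le> K"
  proof (intro ballI allI)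
    fix x n assume x: "x \<in> Bset"
    have L: "(x, 0) \<in> L2" using x by (simp add: L2_def)
    let ?S = "\<Psi> ` tcoset (x, 0)" and ?T = "\<sigma> (tcoset (x, 0))"
    have H: "hausdorff ?S ?T < ereal C'" using assms(5) L by blast
    have a: "\<Psi> (x, n) \<in> ?S" by (simp add: tcoset_eq)
    have "setdist (\<Psi> (x, n)) ?T \<le> (SUP a\<in>?S. setdist a ?T)" using a by (rule SUP_upper)
    also have "\<dots> \<le> hausdorff ?S ?T" unfolding hausdorff_def by simp
    finally have "setdist (\<Psi> (x, n)) ?T < ereal C'" using H by simp
    then obtain b where b: "b \<in> ?T" "ereal (real (l2dist (\<Psi> (x, n)) b)) < ereal C'"
      unfolding setdist_def by (auto simp: INF_less_iff)
    have "real (l2dist (\<Psi> (x, n)) b) < C'" using b(2) by simp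
    then have "l2dist (\<Psi> (x, n)) b \<le> K" unfolding K_def by linarith
    moreover have "fst b = psi x" using b(1) psi[OF x] by (simp add: tcoset_eq)
    moreover have "b \<in> L2" using calculation(2) psi[OF x] by (auto simp: L2_def mem_Times_iff)
    ultimately show "\<exists>b\<in>L2. fst b = psi x \<and> l2dist (\<Psi> (x, n)) b \<le> K" by blast
  qed
  interpret pp_ctx \<Psi> psi K
    by unfold_locales (use assms(1,2) psi close in auto)
  obtain z k where zk: "(z, k) \<in> L2" "(\<forall>x\<in>Bset. psi x = lam_map (z, k) x) \<or>
      (\<forall>x\<in>Bset. psi x = lam_map (z, k) (iota x))" using final by blast
  show ?thesis
    using zk psi by (intro exI[of _ z] exI[of _ k]) auto
qed

end
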